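(* Define $h:\mathrm{T}^2\times\mathbb{R}^2\to[0,\infty]$ by $$h(\varepsilon,\vartheta):=\sup_{\zeta\in\mathbb{R}^2}\ \sup_{\tau\in\mathbb{R}^2}\Big\{(\varepsilon+\zeta\overset{s}{\otimes}\vartheta):(\tau\otimes\tau)\ \Big|\ (\mathrm{I}+\zeta\otimes\zeta):(\tau\otimes\tau)\le 1\Big\}.$$ Then $h$ equals the gauge $g_{\mathscr{C}}$ of the closed convex set $\mathscr{C}:=\{(\varepsilon,\vartheta)\in\mathrm{T}^2\times\mathbb{R}^2:\ \tfrac14\vartheta\otimes\vartheta+\varepsilon\preceq\mathrm{I}\}$. In particular, for every $\varepsilon\in\mathrm{T}^2$, $\vartheta\in\mathbb{R}^2$: $$h(\varepsilon,\vartheta)\le1\iff \tfrac14\,\vartheta\otimes\vartheta+\varepsilon\preceq\mathrm{I}.$$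
   Context: $\mathrm{T}^2$ denotes symmetric real $2\times2$ matrices; $A:B=\mathrm{tr}(A^\top B)$; $A\preceq B$ means $B-A$ is positive semi-definite; $\mathrm{I}$ is the identity; $a\overset{s}{\otimes}b=\frac12(a\otimes b+b\otimes a)$. For a closed convex set $K$ containing the origin, its gauge is $g_K(y)=\inf\{t\ge0: y\in tK\}$ (with $\inf\emptyset=+\infty$). *)

theory Defs
  imports "HOL-Analysis.Analysis"
begin

type_synonym mat2 = "real^2^2"
type_synonym vec2 = "real^2"

definition sym2 :: "mat2 \<Rightarrow> bool" where
  "sym2 A \<longleftrightarrow> transpose A = A"

definition frob :: "mat2 \<Rightarrow> mat2 \<Rightarrow> real" where
  "frob A B = trace (transpose A ** B)"

definition tens :: "vec2 \<Rightarrow> vec2 \<Rightarrow> mat2" where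
  "tens a b = (\<chi> i j. a $ i * b $ j)"

definition stens :: "vec2 \<Rightarrow> vec2 \<Rightarrow> mat2" where
  "stens a b = (1/2) *\<^sub>R (tens a b + tens b a)"

definition loewner_le :: "mat2 \<Rightarrow> mat2 \<Rightarrow> bool" where
  "loewner_le A B \<longleftrightarrow> (\<forall>x::vec2. 0 \<le> x \<bullet> ((B - A) *v x))"

text \<open>Gauge of a set K, valued in the extended reals (Inf {} = +\<infinity>).\<close>
definition gauge_of :: "'a::real_vector set \<Rightarrow> 'a \<Rightarrow> ereal" where
  "gauge_of K y = Inf {ereal t | t. t \<ge> 0 \<and> y \<in> (\<lambda>k. t *\<^sub>R k) ` K}"

definition hfun :: "mat2 \<Rightarrow> vec2 \<Rightarrow> ereal" where
  "hfun \<epsilon> \<theta> = (SUP \<zeta>::vec2. SUP \<tau>\<in>{\<tau>::vec2. frob (mat 1 + tens \<zeta> \<zeta>) (tens \<tau> \<tau>) \<le> 1}.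
       ereal (frob (\<epsilon> + stens \<zeta> \<theta>) (tens \<tau> \<tau>)))"

definition Cset :: "(mat2 \<times> vec2) set" where
  "Cset = {(\<epsilon>, \<theta>). sym2 \<epsilon> \<and> loewner_le ((1/4) *\<^sub>R tens \<theta> \<theta> + \<epsilon>) (mat 1)}"

end

theory Submission
  imports Defs
begin

lemma frob1: "frob (mat 1 + tens z z) (tens t t) = t \<bullet> t + (z \<bullet> t)^2"
  unfolding frob_def trace_def transpose_def matrix_matrix_mult_def tens_def mat_def
  by (simp add: sum_2 inner_vec_def power2_eq_square algebra_simps)
lemma frob2: "frob (e + stens z th) (tens t t) = t \<bullet> (e *v t) + (z \<bullet> t) * (th \<bullet> t)"
  unfolding frob_def trace_def transpose_def matrix_matrix_mult_def tens_def stens_def matrix_vector_mult_def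
  by (simp add: sum_2 inner_vec_def power2_eq_square algebra_simps)
lemma qform: "x \<bullet> ((e::mat2) *v x) = x$1*x$1*e$1$1 + x$1*x$2*e$1$2 + x$2*x$1*e$2$1 + x$2*x$2*e$2$2"
  unfolding matrix_vector_mult_def by (simp add: sum_2 inner_vec_def algebra_simps)
lemma loew1: "x \<bullet> ((mat 1 - ((1/4) *\<^sub>R tens th th + e)) *v x) = x \<bullet> x - ((th \<bullet> x)^2/4 + x \<bullet> (e *v x))"
  unfolding tens_def matrix_vector_mult_def mat_def
  by (simp add: sum_2 inner_vec_def power2_eq_square algebra_simps)
lemma loew: "loewner_le ((1/4) *\<^sub>R tens th th + e) (mat 1) \<longleftrightarrow> (\<forall>x. (th \<bullet> x)^2/4 + x \<bullet> (e *v x) \<le> x \<bullet> x)"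
  unfolding loewner_le_def loew1 by simp

definition Q :: "mat2 \<Rightarrow> vec2 \<Rightarrow> real \<Rightarrow> bool" where
  "Q e th c \<longleftrightarrow> (\<forall>x. (th \<bullet> x)^2/4 + c * (x \<bullet> (e *v x)) \<le> c^2 * (x \<bullet> x))"

lemma hle_iff:
  assumes c: "c > 0"
  shows "hfun e th \<le> ereal c \<longleftrightarrow> Q e th c"
proof -
  have "hfun e th \<le> ereal c \<longleftrightarrow> (\<forall>z t::vec2. t \<bullet> t + (z \<bullet> t)^2 \<le> 1 \<longrightarrow> t \<bullet> (e *v t) + (z \<bullet> t) * (th \<bullet> t) \<le> c)"
    unfolding hfun_def by (simp add: SUP_le_iff frob1 frob2)
  also have "\<dots> \<longleftrightarrow> Q e th c"
  proof
    assume H: "\<forall>z t::vec2. t \<bullet> t + (z \<bullet> t)^2 \<le> 1 \<longrightarrow> t \<bullet> (e *v t) + (z \<bullet> t) * (th \<bullet> t) \<le> c"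
    show "Q e th c" unfolding Q_def
    proof
      fix x :: vec2
      show "(th \<bullet> x)^2/4 + c * (x \<bullet> (e *v x)) \<le> c^2 * (x \<bullet> x)"
      proof (cases "x = 0")
        case True then show ?thesis by simp
      next
        case False
        have xx: "x \<bullet> x > 0" using False by simp
        define l where "l = th \<bullet> x"
        define qe where "qe = x \<bullet> (e *v x)"
        define N where "N = sqrt ((2*c)^2 * (x \<bullet> x) + l^2)"
        have N2pos: "(2*c)^2 * (x \<bullet> x) + l^2 > 0" using xx c
          by (simp add: add_pos_nonneg)
        have Npos: "N > 0" unfolding N_def using N2pos by simp
        have NN: "N^2 = (2*c)^2 * (x \<bullet> x) + l^2" unfolding N_def using N2pos by simp
        define r where "r = 2*c/N"
        define s where "s = l/N"
        define t where "t = r *\<^sub>R x"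
        have rpos: "r > 0" unfolding r_def using c Npos by simp
        have tt: "t \<bullet> t = r^2 * (x \<bullet> x)" unfolding t_def by (simp add: power2_eq_square)
        have ttpos: "t \<bullet> t > 0" using tt rpos xx by simp
        define z where "z = (s / (t \<bullet> t)) *\<^sub>R t"
        have zt: "z \<bullet> t = s" unfolding z_def using ttpos by simp
        have "r^2 * (x \<bullet> x) + s^2 = ((2*c)^2 * (x \<bullet> x) + l^2) / N^2"
          unfolding r_def s_def by (simp add: power_divide add_divide_distrib)
        also have "\<dots> = 1" using NN N2pos by simp
        finally have one: "r^2 * (x \<bullet> x) + s^2 = 1" .
        hence cons: "t \<bullet> t + (z \<bullet> t)^2 \<le> 1" using tt zt by simp
        have "t \<bullet> (e *v t) + (z \<bullet> t) * (th \<bullet> t) \<le> c" using H cons by blast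
        moreover have "t \<bullet> (e *v t) = r^2 * qe" unfolding t_def qe_def
          by (simp add: matrix_vector_mult_scaleR power2_eq_square)
        moreover have "th \<bullet> t = r * l" unfolding t_def l_def by simp
        ultimately have A: "r^2 * qe + s * (r * l) \<le> c * (r^2 * (x \<bullet> x) + s^2)"
          using zt one by simp
        have "N^2 * (r^2 * qe + s * (r * l)) \<le> N^2 * (c * (r^2 * (x \<bullet> x) + s^2))"
          using A by (simp add: mult_left_mono)
        moreover have "N^2 * (r^2 * qe + s * (r * l)) = (2*c)^2 * qe + l * (2*c) * l"
          unfolding r_def s_def using Npos by (simp add: field_simps power2_eq_square)
        moreover have "N^2 * (c * (r^2 * (x \<bullet> x) + s^2)) = c * ((2*c)^2 * (x \<bullet> x) + l^2)"
          unfolding r_def s_def using Npos by (simp add: field_simps power2_eq_square)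
        ultimately have B: "4*c^2 * qe + 2*c*l^2 \<le> 4*c^3 * (x \<bullet> x) + c*l^2"
          by (simp add: power2_eq_square power3_eq_cube algebra_simps)
        hence "4*c * (l^2/4 + c * qe) \<le> 4*c * (c^2 * (x \<bullet> x))"
          by (simp add: power2_eq_square power3_eq_cube algebra_simps)
        hence "l^2/4 + c * qe \<le> c^2 * (x \<bullet> x)" using c by simp
        thus ?thesis unfolding l_def qe_def .
      qed
    qed
  next
    assume "Q e th c"
    hence Qx: "\<And>x. (th \<bullet> x)^2/4 + c * (x \<bullet> (e *v x)) \<le> c^2 * (x \<bullet> x)" unfolding Q_def by blast
    show "\<forall>z t::vec2. t \<bullet> t + (z \<bullet> t)^2 \<le> 1 \<longrightarrow> t \<bullet> (e *v t) + (z \<bullet> t) * (th \<bullet> t) \<le> c"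
    proof (intro allI impI)
      fix z t :: vec2
      assume cons: "t \<bullet> t + (z \<bullet> t)^2 \<le> 1"
      define s where "s = z \<bullet> t"
      define l where "l = th \<bullet> t"
      define qe where "qe = t \<bullet> (e *v t)"
      have q: "l^2/4 + c * qe \<le> c^2 * (t \<bullet> t)" using Qx[of t] unfolding l_def qe_def .
      have qe: "qe \<le> c * (t \<bullet> t) - l^2/(4*c)"
      proof -
        have eq: "c * (c * (t \<bullet> t) - l^2/(4*c)) = c^2*(t \<bullet> t) - l^2/4" using c
          by (simp add: field_simps power2_eq_square)
        have "c * qe \<le> c * (c * (t \<bullet> t) - l^2/(4*c))" using q eq by linarith
        thus ?thesis using c by simp
      qed
      have amgm: "s * l \<le> l^2/(4*c) + c * s^2"
      proof -
        have "0 \<le> (l - 2 * c * s) * (l - 2 * c * s)" by simp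
        hence h1: "4 * c * (s * l) \<le> l^2 + 4 * c^2 * s^2"
          by (simp add: power2_eq_square algebra_simps)
        have e1: "4 * c * (l^2 / (4 * c) + c * s^2) = l^2 + 4 * c^2 * s^2" using c
          by (simp add: field_simps power2_eq_square)
        have "4 * c * (s * l) \<le> 4 * c * (l^2 / (4 * c) + c * s^2)" using h1 e1 by linarith
        thus ?thesis using c by simp
      qed
      have "qe + s * l \<le> c * (t \<bullet> t + s^2)" using qe amgm by (simp add: algebra_simps)
      also have "\<dots> \<le> c" using cons c unfolding s_def by (simp add: mult_left_le)
      finally show "t \<bullet> (e *v t) + (z \<bullet> t) * (th \<bullet> t) \<le> c" unfolding qe_def s_def l_def .
    qed
  qed
  finally show ?thesis .
qed

lemma mv_scale: "((t::real) *\<^sub>R (e::mat2)) *v x = t *\<^sub>R (e *v x)"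
  by (simp add: vec_eq_iff matrix_vector_mult_def sum_distrib_left algebra_simps)

lemma sym2_iff: "sym2 e \<longleftrightarrow> e$1$2 = e$2$1"
  unfolding sym2_def transpose_def by (auto simp: vec_eq_iff forall_2)

lemma Cset_alt: "Cset = {p. fst p $1$2 = fst p $2$1 \<and>
   (\<forall>x. (snd p \<bullet> x)^2/4 + (x$1*x$1*fst p$1$1 + x$1*x$2*fst p$1$2 + x$2*x$1*fst p$2$1 + x$2*x$2*fst p$2$2) \<le> x \<bullet> x)}"
  proof -
  have "Cset = {p. sym2 (fst p) \<and> (\<forall>x. (snd p \<bullet> x)^2/4 + x \<bullet> (fst p *v x) \<le> x \<bullet> x)}"
    unfolding Cset_def loew by (rule set_eqI) (simp add: case_prod_unfold)
  then show ?thesis unfolding sym2_iff qform .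
qed

lemma Cset_closed: "closed Cset"
  unfolding Cset_alt
proof (rule closed_Collect_conj)
  show "closed {p::mat2\<times>vec2. fst p $1$2 = fst p $2$1}"
    by (rule closed_Collect_eq) (auto intro!: continuous_intros)
  show "closed {p::mat2\<times>vec2. \<forall>x. (snd p \<bullet> x)^2/4 + (x$1*x$1*fst p$1$1 + x$1*x$2*fst p$1$2 + x$2*x$1*fst p$2$1 + x$2*x$2*fst p$2$2) \<le> x \<bullet> x}"
  proof (rule closed_Collect_all)
    fix x :: vec2
    show "closed {p::mat2\<times>vec2. (snd p \<bullet> x)^2/4 + (x$1*x$1*fst p$1$1 + x$1*x$2*fst p$1$2 + x$2*x$1*fst p$2$1 + x$2*x$2*fst p$2$2) \<le> x \<bullet> x}"
      by (rule closed_Collect_le) (auto intro!: continuous_intros)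
  qed
qed

lemma sq_convex:
  fixes u v a b :: real
  assumes u: "u \<ge> 0" and v: "v \<ge> 0" and uv: "u + v = 1"
  shows "(u * a + v * b)^2 \<le> u * a^2 + v * b^2"
proof -
  have vv: "v = 1 - u" using uv by simp
  have "u * a^2 + v * b^2 - (u * a + v * b)^2 = u * v * (a - b)^2"
    unfolding vv by (simp add: power2_eq_square algebra_simps)
  moreover have "u * v * (a - b)^2 \<ge> 0" using u v by simp
  ultimately show ?thesis by linarith
qed

lemma Cset_convex: "convex Cset"
proof (unfold convex_def, intro ballI allI impI)
  fix p q :: "mat2 \<times> vec2" and u v :: real
  assume p: "p \<in> Cset" and q: "q \<in> Cset" and u: "0 \<le> u" and v: "0 \<le> v" and uv: "u + v = 1"
  obtain e1 th1 where p': "p = (e1, th1)" by (cases p)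
  obtain e2 th2 where q': "q = (e2, th2)" by (cases q)
  have s1: "sym2 e1" and L1: "\<And>x. (th1 \<bullet> x)^2/4 + x \<bullet> (e1 *v x) \<le> x \<bullet> x"
    using p unfolding p' Cset_def loew by auto
  have s2: "sym2 e2" and L2: "\<And>x. (th2 \<bullet> x)^2/4 + x \<bullet> (e2 *v x) \<le> x \<bullet> x"
    using q unfolding q' Cset_def loew by auto
  have "sym2 (u *\<^sub>R e1 + v *\<^sub>R e2)" using s1 s2 unfolding sym2_iff by simp
  moreover have "\<forall>x. ((u *\<^sub>R th1 + v *\<^sub>R th2) \<bullet> x)^2/4 + x \<bullet> ((u *\<^sub>R e1 + v *\<^sub>R e2) *v x) \<le> x \<bullet> x"
  proof
    fix x :: vec2
    have a: "((u *\<^sub>R th1 + v *\<^sub>R th2) \<bullet> x) = u * (th1 \<bullet> x) + v * (th2 \<bullet> x)"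
      by (simp add: inner_add_left)
    have b: "x \<bullet> ((u *\<^sub>R e1 + v *\<^sub>R e2) *v x) = u * (x \<bullet> (e1 *v x)) + v * (x \<bullet> (e2 *v x))"
      by (simp add: matrix_vector_mult_add_rdistrib mv_scale inner_add_right)
    have c: "(u * (th1 \<bullet> x) + v * (th2 \<bullet> x))^2 \<le> u * (th1 \<bullet> x)^2 + v * (th2 \<bullet> x)^2"
      using sq_convex u v uv by blast
    have d: "u * ((th1 \<bullet> x)^2/4 + x \<bullet> (e1 *v x)) + v * ((th2 \<bullet> x)^2/4 + x \<bullet> (e2 *v x)) \<le> u * (x \<bullet> x) + v * (x \<bullet> x)"
      using L1[of x] L2[of x] u v by (intro add_mono mult_left_mono) auto
    have "u * (x \<bullet> x) + v * (x \<bullet> x) = x \<bullet> x" using uv by (metis distrib_right mult_1)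
    then show "((u *\<^sub>R th1 + v *\<^sub>R th2) \<bullet> x)^2/4 + x \<bullet> ((u *\<^sub>R e1 + v *\<^sub>R e2) *v x) \<le> x \<bullet> x"
      unfolding a b using c d by (simp add: algebra_simps)
  qed
  ultimately show "u *\<^sub>R p + v *\<^sub>R q \<in> Cset" unfolding p' q' Cset_def loew by simp
qed

lemma Qscale: "t > 0 \<Longrightarrow> Q (t *\<^sub>R e) (t *\<^sub>R th) t \<longleftrightarrow> (\<forall>x. (th \<bullet> x)^2/4 + x \<bullet> (e *v x) \<le> x \<bullet> x)"
proof -
  assume t: "t > 0"
  have "\<And>x. (t *\<^sub>R th \<bullet> x)^2/4 + t * (x \<bullet> ((t *\<^sub>R e) *v x)) = t^2 * ((th \<bullet> x)^2/4 + x \<bullet> (e *v x))"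
    by (simp add: mv_scale power2_eq_square algebra_simps)
  moreover have "\<And>a b. t^2 * a \<le> t^2 * b \<longleftrightarrow> a \<le> b" using t by simp
  ultimately show ?thesis unfolding Q_def by simp
qed

lemma scaled_mem: assumes t: "t > 0"
  shows "(e, th) \<in> (\<lambda>k. t *\<^sub>R k) ` Cset \<longleftrightarrow> sym2 e \<and> Q e th t"
proof
  assume "(e, th) \<in> (\<lambda>k. t *\<^sub>R k) ` Cset"
  then obtain e' th' where m: "(e', th') \<in> Cset" and eq: "(e, th) = t *\<^sub>R (e', th')" by auto
  have e: "e = t *\<^sub>R e'" and th: "th = t *\<^sub>R th'" using eq by auto
  have "sym2 e'" and "\<forall>x. (th' \<bullet> x)^2/4 + x \<bullet> (e' *v x) \<le> x \<bullet> x" using m unfolding Cset_def loew by auto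
  then show "sym2 e \<and> Q e th t" unfolding e th using Qscale[OF t] by (simp add: sym2_iff)
next
  assume h: "sym2 e \<and> Q e th t"
  have e: "e = t *\<^sub>R ((1/t) *\<^sub>R e)" and th: "th = t *\<^sub>R ((1/t) *\<^sub>R th)" using t by auto
  have "sym2 ((1/t) *\<^sub>R e)" using h by (simp add: sym2_iff)
  moreover have "Q (t *\<^sub>R ((1/t) *\<^sub>R e)) (t *\<^sub>R ((1/t) *\<^sub>R th)) t" using h e th by metis
  hence "\<forall>x. (((1/t) *\<^sub>R th) \<bullet> x)^2/4 + x \<bullet> (((1/t) *\<^sub>R e) *v x) \<le> x \<bullet> x"
    using Qscale[OF t] by blast
  ultimately have "((1/t) *\<^sub>R e, (1/t) *\<^sub>R th) \<in> Cset" unfolding Cset_def loew by simp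
  moreover have "(e, th) = t *\<^sub>R ((1/t) *\<^sub>R e, (1/t) *\<^sub>R th)" using t by simp
  ultimately show "(e, th) \<in> (\<lambda>k. t *\<^sub>R k) ` Cset" by blast
qed

lemma h_nonneg: "hfun e th \<ge> 0"
  unfolding hfun_def
  by (rule SUP_upper2[of 0], simp, rule SUP_upper2[of 0]) (simp_all add: frob1 frob2)

lemma h_finite: "\<exists>C. hfun e th \<le> ereal C"
proof -
  obtain K where K: "K > 0" "\<And>x. norm (e *v x) \<le> norm x * K"
    using bounded_linear.pos_bounded[OF matrix_vector_mul_bounded_linear[of e]] by blast
  have "\<forall>z t::vec2. t \<bullet> t + (z \<bullet> t)^2 \<le> 1 \<longrightarrow> t \<bullet> (e *v t) + (z \<bullet> t) * (th \<bullet> t) \<le> K + norm th"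
  proof (intro allI impI)
    fix z t :: vec2
    assume cons: "t \<bullet> t + (z \<bullet> t)^2 \<le> 1"
    have tnn: "(z \<bullet> t)^2 \<ge> 0" by simp
    have t1: "t \<bullet> t \<le> 1" using cons tnn by linarith
    have tt: "norm t \<le> 1" using t1 by (simp add: norm_eq_sqrt_inner)
    have zt: "\<bar>z \<bullet> t\<bar> \<le> 1"
    proof -
      have "(z \<bullet> t)^2 \<le> 1" using cons inner_ge_zero[of t] by linarith
      thus ?thesis by (simp add: abs_square_le_1)
    qed
    have "t \<bullet> (e *v t) \<le> norm t * norm (e *v t)" by (rule norm_cauchy_schwarz)
    also have "\<dots> \<le> norm t * (norm t * K)" using K(2) by (simp add: mult_left_mono)
    also have "\<dots> \<le> K"
    proof -
      have "norm t * norm t \<le> 1" using tt by (simp add: mult_le_one)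
      hence "(norm t * norm t) * K \<le> 1 * K" using K(1) by (intro mult_right_mono) auto
      thus ?thesis by (simp add: mult.assoc)
    qed
    finally have A: "t \<bullet> (e *v t) \<le> K" .
    have "(z \<bullet> t) * (th \<bullet> t) \<le> \<bar>z \<bullet> t\<bar> * \<bar>th \<bullet> t\<bar>" by (simp add: abs_mult[symmetric])
    also have "\<dots> \<le> 1 * (norm th * norm t)"
      using zt Cauchy_Schwarz_ineq2[of th t] by (intro mult_mono) auto
    also have "\<dots> \<le> norm th" using tt by (simp add: mult_left_le)
    finally show "t \<bullet> (e *v t) + (z \<bullet> t) * (th \<bullet> t) \<le> K + norm th" using A by linarith
  qed
  hence "hfun e th \<le> ereal (K + norm th)"
    unfolding hfun_def by (simp add: SUP_le_iff frob1 frob2)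
  thus ?thesis by blast
qed

lemma h_zero: "hfun 0 0 = 0"
proof -
  have z: "(0::mat2) *v x = 0" for x by (simp add: vec_eq_iff matrix_vector_mult_def)
  have Q0: "Q 0 0 c" for c unfolding Q_def z by simp
  have "hfun 0 0 \<le> 0 + ereal c" if c: "0 < c" for c
  proof -
    have "hfun 0 0 \<le> ereal c" using hle_iff[OF c] Q0 by blast
    then show ?thesis by simp
  qed
  hence "hfun 0 0 \<le> 0" by (rule ereal_le_epsilon2)
  thus ?thesis using h_nonneg[of 0 0] by (rule antisym)
qed

lemma gauge_eq: assumes s: "sym2 e" shows "hfun e th = gauge_of Cset (e, th)"
proof -
  let ?S = "{ereal t | t. t \<ge> 0 \<and> (e, th) \<in> (\<lambda>k. t *\<^sub>R k) ` Cset}"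
  obtain C where C: "hfun e th \<le> ereal C" using h_finite by blast
  have nn: "hfun e th \<ge> 0" by (rule h_nonneg)
  obtain h where h: "hfun e th = ereal h" using C nn by (cases "hfun e th") auto
  have h0: "h \<ge> 0" using nn h by simp
  have lower: "hfun e th \<le> Inf ?S"
  proof (rule Inf_greatest)
    fix y assume "y \<in> ?S"
    then obtain t where y: "y = ereal t" and t0: "t \<ge> 0" and m: "(e, th) \<in> (\<lambda>k. t *\<^sub>R k) ` Cset" by blast
    show "hfun e th \<le> y"
    proof (cases "t = 0")
      case True
      then have "(e, th) = 0" using m by auto
      then have "e = 0" "th = 0" by (simp_all add: zero_prod_def)
      then show ?thesis using h_zero y True by simp
    next
      case False
      then have tp: "t > 0" using t0 by simp
      then show ?thesis using scaled_mem[OF tp] m hle_iff[OF tp] y by simp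
    qed
  qed
  have upper: "Inf ?S \<le> hfun e th"
  proof (rule ereal_le_epsilon2)
    fix d :: real assume d: "0 < d"
    have tp: "h + d > 0" using h0 d by simp
    have "hfun e th \<le> ereal (h + d)" using h d by simp
    hence "Q e th (h + d)" using hle_iff[OF tp] by simp
    hence "(e, th) \<in> (\<lambda>k. (h + d) *\<^sub>R k) ` Cset" using scaled_mem[OF tp] s by simp
    hence "ereal (h + d) \<in> ?S" using tp by force
    hence "Inf ?S \<le> ereal (h + d)" by (rule Inf_lower)
    thus "Inf ?S \<le> hfun e th + ereal d" using h by simp
  qed
  show ?thesis unfolding gauge_of_def using lower upper by (rule antisym)
qed

theorem proposition4p1:
  shows "closed Cset \<and> convex Cset \<and> (0, 0) \<in> Cset \<and>
    (\<forall>\<epsilon> \<theta>. sym2 \<epsilon> \<longrightarrow>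
       hfun \<epsilon> \<theta> = gauge_of Cset (\<epsilon>, \<theta>) \<and>
       (hfun \<epsilon> \<theta> \<le> 1 \<longleftrightarrow> loewner_le ((1/4) *\<^sub>R tens \<theta> \<theta> + \<epsilon>) (mat 1)))"
proof (intro conjI allI impI)
  show "closed Cset" by (rule Cset_closed)
  show "convex Cset" by (rule Cset_convex)
  show "(0, 0) \<in> Cset" unfolding Cset_def loew by (simp add: sym2_iff)
  fix e :: mat2 and th :: vec2
  assume s: "sym2 e"
  show "hfun e th = gauge_of Cset (e, th)" using gauge_eq[OF s] .
  have "hfun e th \<le> 1 \<longleftrightarrow> Q e th 1" using hle_iff[of 1] by (simp add: one_ereal_def)
  also have "\<dots> \<longleftrightarrow> loewner_le ((1/4) *\<^sub>R tens th th + e) (mat 1)" unfolding Q_def loew by simp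
  finally show "hfun e th \<le> 1 \<longleftrightarrow> loewner_le ((1/4) *\<^sub>R tens th th + e) (mat 1)" .
qed

end
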